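(* Let $p$ be a positive continuous even function on $(-1,1)$ such that no nontrivial solution $u$ of $u''+pu=0$ has more than one zero in $(-1,1)$, and let $F$ be the solution of $\mathcal{S}F=2p$ on $(-1,1)$ with $F(0)=0$, $F'(0)=1$, $F''(0)=0$. Let $\varphi:(-1,1)\to\mathbb{R}^n$ be a $C^3$ curve with $\varphi'(x)\neq 0$ for all $x$, normalized by $\varphi(0)=0$, $|\varphi'(0)|=1$ and $\langle\varphi'(0),\varphi''(0)\rangle=0$. If $S_1\varphi(x)\le 2p(x)$ for all $x\in(-1,1)$, then for all $x\in(-1,1)$: (a) $|\varphi'(x)|\le F'(x)$, and (b) $\dfrac{|\varphi'(x)|}{1+|\varphi(x)|^2}\le \dfrac{F'(x)}{1+F(x)^2}$.
   Context: For a real function $g$ with $g'\neq0$, the Schwarzian derivative is $\mathcal{S}g=(g''/g')'-\tfrac12(g''/g')^2$. Equivalently, $F(x)=\int_0^x u_0(t)^{-2}\,dt$, where $u_0$ is the solution of $u''+pu=0$ with $u_0(0)=1$, $u_0'(0)=0$; $u_0$ has no zeros on $(-1,1)$, and $F$ is odd, strictly increasing, with $F'>0$. For a $C^3$ curve $\varphi$ on an interval into $\mathbb{R}^n$ with $\varphi'\neq0$, the Ahlfors Schwarzian is $$S_1\varphi=\frac{\langle\varphi',\varphi'''\rangle}{|\varphi'|^2}-3\frac{\langle\varphi',\varphi''\rangle^2}{|\varphi'|^4}+\frac32\frac{|\varphi''|^2}{|\varphi'|^2},$$ where $\langle\cdot,\cdot\rangle$ is the Euclidean inner product and $|\cdot|$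 the Euclidean norm. *)

theory Defs
  imports "HOL-Analysis.Analysis"
begin

definition schwarzian :: "(real \<Rightarrow> real) \<Rightarrow> real \<Rightarrow> real" where
  "schwarzian g x =
     deriv (\<lambda>t. deriv (deriv g) t / deriv g t) x - 1/2 * (deriv (deriv g) x / deriv g x)^2"

definition vd :: "(real \<Rightarrow> 'a::real_normed_vector) \<Rightarrow> real \<Rightarrow> 'a" where
  "vd \<phi> x = vector_derivative \<phi> (at x)"

definition ahlfors_S1 :: "(real \<Rightarrow> 'a::real_inner) \<Rightarrow> real \<Rightarrow> real" where
  "ahlfors_S1 \<phi> x =
     (vd \<phi> x \<bullet> vd (vd (vd \<phi>)) x) / (norm (vd \<phi> x))^2
     - 3 * (vd \<phi> x \<bullet> vd (vd \<phi>) x)^2 / (norm (vd \<phi> x))^4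
     + 3/2 * (norm (vd (vd \<phi>) x))^2 / (norm (vd \<phi> x))^2"

definition disconjugate :: "(real \<Rightarrow> real) \<Rightarrow> bool" where
  "disconjugate p \<longleftrightarrow>
     (\<forall>u. ((\<forall>x\<in>{-1<..<1}. u differentiable at x \<and> deriv u differentiable at x \<and>
              deriv (deriv u) x + p x * u x = 0)
           \<and> (\<exists>x\<in>{-1<..<1}. u x \<noteq> 0))
       \<longrightarrow> \<not> (\<exists>a\<in>{-1<..<1}. \<exists>b\<in>{-1<..<1}. a \<noteq> b \<and> u a = 0 \<and> u b = 0))"

end

theory Submission
  imports Defs
begin



lemma DERIV_inner:
  fixes f g :: "real \<Rightarrow> 'a::real_inner"
  assumes "(f has_vector_derivative f') (at t)" "(g has_vector_derivative g') (at t)"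
  shows "((\<lambda>x. f x \<bullet> g x) has_real_derivative (f' \<bullet> g t + f t \<bullet> g')) (at t)"
proof -
  have "((\<lambda>x. f x \<bullet> g x) has_derivative (\<lambda>h. f t \<bullet> (h *\<^sub>R g') + (h *\<^sub>R f') \<bullet> g t)) (at t)"
    using assms unfolding has_vector_derivative_def by (intro has_derivative_inner)
  then show ?thesis unfolding has_field_derivative_def
    by (rule has_derivative_eq_rhs) (auto simp: algebra_simps fun_eq_iff inner_commute)
qed

lemma sqrt_derivs:
  fixes h h1 :: "real \<Rightarrow> real"
  assumes "h t > 0" "(h has_real_derivative h1 t) (at t)" "(h1 has_real_derivative h2) (at t)"
  shows "((\<lambda>x. sqrt (h x)) has_real_derivative h1 t / (2 * sqrt (h t))) (at t)"
    and "((\<lambda>x. h1 x / (2 * sqrt (h x))) has_real_derivative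
          (2 * h t * h2 - (h1 t)^2) / (4 * h t * sqrt (h t))) (at t)"
proof -
  show "((\<lambda>x. sqrt (h x)) has_real_derivative h1 t / (2 * sqrt (h t))) (at t)"
    using assms by (auto intro!: derivative_eq_intros simp: field_simps)
  have s: "sqrt (h t) * sqrt (h t) = h t" using assms by simp
  show "((\<lambda>x. h1 x / (2 * sqrt (h x))) has_real_derivative
          (2 * h t * h2 - (h1 t)^2) / (4 * h t * sqrt (h t))) (at t)"
    using assms apply (auto intro!: derivative_eq_intros)
    using s apply (simp add: field_simps power2_eq_square)
    done
qed




lemma sturm_aux:
  fixes y y1 Y Y1 k :: "real \<Rightarrow> real"
  assumes ab: "a < T"
    and dy: "\<And>t. t \<in> {a..T} \<Longrightarrow> (y has_real_derivative y1 t) (at t) \<and> (y1 has_real_derivative y2 t) (at t)"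
    and dY: "\<And>t. t \<in> {a..T} \<Longrightarrow> (Y has_real_derivative Y1 t) (at t) \<and> (Y1 has_real_derivative Y2 t) (at t)"
    and Ypos: "\<And>t. t \<in> {a..T} \<Longrightarrow> Y t > 0"
    and eq: "\<And>t. t \<in> {a..T} \<Longrightarrow> y2 t * Y t - y t * Y2 t = k t * y t"
    and kpos: "\<And>t. t \<in> {a..T} \<Longrightarrow> k t \<ge> 0"
    and ypos: "\<And>t. t \<in> {a<..<T} \<Longrightarrow> y t \<ge> 0"
    and init: "y a = Y a" "y1 a = Y1 a"
  shows "y T \<ge> Y T"
proof -
  define Wr where "Wr t = y1 t * Y t - y t * Y1 t" for t
  have Wd: "(Wr has_real_derivative k t * y t) (at t)" if "t \<in> {a..T}" for t
  proof -
    have "(Wr has_real_derivative (y2 t * Y t + y1 t * Y1 t - (y1 t * Y1 t + y t * Y2 t))) (at t)"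
      unfolding Wr_def[abs_def] using dy[OF that] dY[OF that]
      by (auto intro!: derivative_eq_intros)
    then show ?thesis using eq[OF that] by (simp add: algebra_simps)
  qed
  have Wnn: "Wr t \<ge> 0" if "t \<in> {a..T}" for t
  proof -
    have "Wr a \<le> Wr t"
    proof (rule DERIV_nonneg_imp_increasing_open[of a t Wr])
      show "a \<le> t" using that by auto
      show "\<exists>z. (Wr has_real_derivative z) (at x) \<and> 0 \<le> z" if "a < x" "x < t" for x
        using Wd[of x] ypos[of x] kpos[of x] that \<open>t \<in> {a..T}\<close> by auto
      show "continuous_on {a..t} Wr"
        using that by (intro continuous_at_imp_continuous_on ballI DERIV_isCont[OF Wd]) auto
    qed
    moreover have "Wr a = 0" using init unfolding Wr_def by simp
    ultimately show ?thesis by simp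
  qed
  have "y a / Y a \<le> y T / Y T"
  proof (rule DERIV_nonneg_imp_increasing_open[of a T "\<lambda>t. y t / Y t"])
    show "a \<le> T" using ab by simp
    fix x assume x: "a < x" "x < T"
    then have xi: "x \<in> {a..T}" by auto
    have "((\<lambda>t. y t / Y t) has_real_derivative (y1 x * Y x - y x * Y1 x) / (Y x)^2) (at x)"
      using dy[OF xi] dY[OF xi] Ypos[OF xi]
      by (auto intro!: derivative_eq_intros simp: power2_eq_square)
    moreover have "(y1 x * Y x - y x * Y1 x) / (Y x)^2 \<ge> 0"
      using Wnn[OF xi] unfolding Wr_def by simp
    ultimately show "\<exists>z. ((\<lambda>t. y t / Y t) has_real_derivative z) (at x) \<and> 0 \<le> z" by blast
  next
    show "continuous_on {a..T} (\<lambda>t. y t / Y t)"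
      using dy dY Ypos
      by (intro continuous_at_imp_continuous_on ballI continuous_intros DERIV_isCont) (auto, fastforce+)
  qed
  moreover have "y a / Y a = 1" using init Ypos[of a] ab by simp
  ultimately show ?thesis using Ypos[of T] ab by (simp add: field_simps)
qed

lemma sturm_right:
  fixes y y1 Y Y1 k :: "real \<Rightarrow> real"
  assumes ab: "a < b"
    and dy: "\<And>t. t \<in> {a..b} \<Longrightarrow> (y has_real_derivative y1 t) (at t) \<and> (y1 has_real_derivative y2 t) (at t)"
    and dY: "\<And>t. t \<in> {a..b} \<Longrightarrow> (Y has_real_derivative Y1 t) (at t) \<and> (Y1 has_real_derivative Y2 t) (at t)"
    and Ypos: "\<And>t. t \<in> {a..b} \<Longrightarrow> Y t > 0"
    and eq: "\<And>t. t \<in> {a..b} \<Longrightarrow> y2 t * Y t - y t * Y2 t = k t * y t"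
    and kpos: "\<And>t. t \<in> {a..b} \<Longrightarrow> k t \<ge> 0"
    and init: "y a = Y a" "y1 a = Y1 a"
  shows "y b \<ge> Y b"
proof -
  have ypos: "y t > 0" if "t \<in> {a..b}" for t
  proof (rule ccontr)
    assume "\<not> y t > 0"
    define Z where "Z = {x \<in> {a..b}. y x \<le> 0}"
    have cy: "continuous_on {a..b} y"
      by (intro continuous_at_imp_continuous_on ballI DERIV_isCont) (use dy in blast)
    have "closed Z" unfolding Z_def
      by (rule continuous_on_closed_Collect_le[OF cy]) auto
    moreover have "Z \<noteq> {}" using that \<open>\<not> y t > 0\<close> unfolding Z_def by auto
    moreover have "bdd_below Z" unfolding Z_def by (rule bdd_belowI[of _ a]) auto
    ultimately have IZ: "Inf Z \<in> Z" by (rule closed_contains_Inf[rotated 2])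
    define t1 where "t1 = Inf Z"
    have t1: "t1 \<in> {a..b}" "y t1 \<le> 0" using IZ unfolding t1_def Z_def by auto
    have "t1 \<noteq> a" using t1 init Ypos[of a] ab by auto
    then have at1: "a < t1" using t1 by auto
    have "y x \<ge> 0" if "x \<in> {a<..<t1}" for x
    proof (rule ccontr)
      assume "\<not> y x \<ge> 0"
      then have "x \<in> Z" using that t1 unfolding Z_def by auto
      then have "t1 \<le> x" unfolding t1_def using \<open>bdd_below Z\<close> by (rule cInf_lower)
      then show False using that by auto
    qed
    then have "y t1 \<ge> Y t1"
      using t1 by (intro sturm_aux[OF at1, of y y1 y2 Y Y1 Y2 k]) (auto intro!: dy dY Ypos eq kpos init)
    then show False using Ypos[of t1] t1 by auto
  qed
  have "\<And>t. t \<in> {a<..<b} \<Longrightarrow> y t \<ge> 0" using ypos by (simp add: less_imp_le)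
  then show ?thesis
    by (intro sturm_aux[OF ab, of y y1 y2 Y Y1 Y2 k]) (auto intro!: dy dY Ypos eq kpos init)
qed

lemma refl_deriv:
  assumes "(f has_real_derivative d) (at (-t))"
  shows "((\<lambda>x. f (-x)) has_real_derivative -d) (at t)"
proof -
  have "((\<lambda>x. f (-x)) has_real_derivative d * (-1)) (at t)"
    by (rule DERIV_chain2[where g=uminus, OF assms]) (auto intro!: derivative_eq_intros)
  then show ?thesis by simp
qed

lemma sturm_left:
  fixes y y1 Y Y1 k :: "real \<Rightarrow> real"
  assumes ab: "a < b"
    and dy: "\<And>t. t \<in> {a..b} \<Longrightarrow> (y has_real_derivative y1 t) (at t) \<and> (y1 has_real_derivative y2 t) (at t)"
    and dY: "\<And>t. t \<in> {a..b} \<Longrightarrow> (Y has_real_derivative Y1 t) (at t) \<and> (Y1 has_real_derivative Y2 t) (at t)"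
    and Ypos: "\<And>t. t \<in> {a..b} \<Longrightarrow> Y t > 0"
    and eq: "\<And>t. t \<in> {a..b} \<Longrightarrow> y2 t * Y t - y t * Y2 t = k t * y t"
    and kpos: "\<And>t. t \<in> {a..b} \<Longrightarrow> k t \<ge> 0"
    and init: "y b = Y b" "y1 b = Y1 b"
  shows "y a \<ge> Y a"
proof -
  have m: "-t \<in> {a..b}" if "t \<in> {-b..-a}" for t using that by auto
  have "(\<lambda>t. y (-t)) (-a) \<ge> (\<lambda>t. Y (-t)) (-a)"
  proof (rule sturm_right[of "-b" "-a" _ "\<lambda>t. - y1 (-t)" "\<lambda>t. y2 (-t)" _ "\<lambda>t. - Y1 (-t)" "\<lambda>t. Y2 (-t)" "\<lambda>t. k (-t)"])
    show "-b < -a" using ab by simp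
    fix t assume t: "t \<in> {-b..-a}"
    show "((\<lambda>t. y (- t)) has_real_derivative - y1 (- t)) (at t) \<and> ((\<lambda>t. - y1 (- t)) has_real_derivative y2 (- t)) (at t)"
      using dy[OF m[OF t]]
      by (auto intro!: refl_deriv[where f=y, simplified] refl_deriv[where f=y1, simplified, THEN DERIV_minus, simplified])
    show "((\<lambda>t. Y (- t)) has_real_derivative - Y1 (- t)) (at t) \<and> ((\<lambda>t. - Y1 (- t)) has_real_derivative Y2 (- t)) (at t)"
      using dY[OF m[OF t]]
      by (auto intro!: refl_deriv[where f=Y, simplified] refl_deriv[where f=Y1, simplified, THEN DERIV_minus, simplified])
    show "Y (-t) > 0" using Ypos[OF m[OF t]] .
    show "y2 (- t) * Y (- t) - y (- t) * Y2 (- t) = k (- t) * y (- t)" using eq[OF m[OF t]] .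
    show "k (-t) \<ge> 0" using kpos[OF m[OF t]] .
  qed (use init in auto)
  then show ?thesis by simp
qed

lemma sturm_any:
  fixes y ya Y Ya k :: "real \<Rightarrow> real"
  assumes x0: "x0 \<noteq> 0"
    and dy: "\<And>t. t \<in> {min 0 x0..max 0 x0} \<Longrightarrow> (y has_real_derivative ya t) (at t) \<and> (ya has_real_derivative yb t) (at t)"
    and dY: "\<And>t. t \<in> {min 0 x0..max 0 x0} \<Longrightarrow> (Y has_real_derivative Ya t) (at t) \<and> (Ya has_real_derivative Yb t) (at t)"
    and Ypos: "\<And>t. t \<in> {min 0 x0..max 0 x0} \<Longrightarrow> Y t > 0"
    and eq: "\<And>t. t \<in> {min 0 x0..max 0 x0} \<Longrightarrow> yb t * Y t - y t * Yb t = k t * y t"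
    and kpos: "\<And>t. t \<in> {min 0 x0..max 0 x0} \<Longrightarrow> k t \<ge> 0"
    and init: "y 0 = Y 0" "ya 0 = Ya 0"
  shows "y x0 \<ge> Y x0"
proof (cases "x0 > 0")
  case True
  then show ?thesis
    using sturm_right[of 0 x0 y ya yb Y Ya Yb k] assms by auto
next
  case False
  then have "x0 < 0" using x0 by simp
  then show ?thesis
    using sturm_left[of x0 0 y ya yb Y Ya Yb k] assms by auto
qed




lemma curve_b:
  fixes \<phi> V1 V2 :: "real \<Rightarrow> 'a::real_inner" and N s P E A hb hb1 :: "real \<Rightarrow> real"
  assumes d0: "(\<phi> has_vector_derivative V1 t) (at t)"
    and d1: "(V1 has_vector_derivative V2 t) (at t)"
    and d2: "(V2 has_vector_derivative V3) (at t)"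
    and nz: "V1 t \<noteq> 0"
    and defs: "N = (\<lambda>x. V1 x \<bullet> V1 x)" "s = (\<lambda>x. sqrt (N x))" "P = (\<lambda>x. 1 + \<phi> x \<bullet> \<phi> x)"
      "E = (\<lambda>x. \<phi> x \<bullet> V1 x)" "A = (\<lambda>x. V1 x \<bullet> V2 x)"
      "hb = (\<lambda>x. P x / s x)" "hb1 = (\<lambda>x. 2 * E x / s x - P x * A x / s x ^ 3)"
  shows "(hb has_real_derivative hb1 t) (at t)"
    and "(hb1 has_real_derivative
           2 * (N t + \<phi> t \<bullet> V2 t) / s t - 4 * E t * A t / s t ^ 3
           - P t * (V2 t \<bullet> V2 t + V1 t \<bullet> V3) / s t ^ 3 + 3 * P t * (A t)^2 / s t ^ 5) (at t)"
proof -
  have Np: "N t > 0" using nz defs by simp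
  have sp: "s t > 0" and Ns: "N t = s t ^ 2" using Np defs by auto
  have dN: "(N has_real_derivative 2 * A t) (at t)"
    using DERIV_inner[OF d1 d1] unfolding defs by (simp add: inner_commute)
  have dP: "(P has_real_derivative 2 * E t) (at t)"
    using DERIV_inner[OF d0 d0] unfolding defs by (auto intro!: derivative_eq_intros simp: inner_commute)
  have dE: "(E has_real_derivative N t + \<phi> t \<bullet> V2 t) (at t)"
    using DERIV_inner[OF d0 d1] unfolding defs by (simp add: inner_commute)
  have dA: "(A has_real_derivative V2 t \<bullet> V2 t + V1 t \<bullet> V3) (at t)"
    using DERIV_inner[OF d1 d2] unfolding defs by (simp add: inner_commute)
  have ds: "(s has_real_derivative A t / s t) (at t)"
  proof -
    have "((\<lambda>x. sqrt (N x)) has_real_derivative inverse (sqrt (N t)) / 2 * (2 * A t)) (at t)"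
      by (rule DERIV_chain2[OF DERIV_real_sqrt[OF Np] dN])
    then show ?thesis using defs(2) by (simp add: field_simps)
  qed
  have ds3: "((\<lambda>x. s x ^ 3) has_real_derivative 3 * s t ^ 2 * (A t / s t)) (at t)"
    using ds by (auto intro!: derivative_eq_intros simp: power2_eq_square)
  show "(hb has_real_derivative hb1 t) (at t)"
  proof -
    have "(hb has_real_derivative (2 * E t * s t - P t * (A t / s t)) / (s t * s t)) (at t)"
      unfolding defs(6) by (rule DERIV_divide[OF dP ds]) (use sp in simp)
    moreover have "(2 * E t * s t - P t * (A t / s t)) / (s t * s t) = hb1 t"
      unfolding defs(7) using sp by (simp add: field_simps power3_eq_cube)
    ultimately show ?thesis by simp
  qed
  show "(hb1 has_real_derivative
           2 * (N t + \<phi> t \<bullet> V2 t) / s t - 4 * E t * A t / s t ^ 3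
           - P t * (V2 t \<bullet> V2 t + V1 t \<bullet> V3) / s t ^ 3 + 3 * P t * (A t)^2 / s t ^ 5) (at t)"
  proof -
    have t1: "((\<lambda>x. 2 * E x / s x) has_real_derivative
        (2 * (N t + \<phi> t \<bullet> V2 t) * s t - 2 * E t * (A t / s t)) / (s t * s t)) (at t)"
      by (rule DERIV_divide[OF DERIV_cmult[OF dE] ds]) (use sp in simp)
    have t2: "((\<lambda>x. P x * A x / s x ^ 3) has_real_derivative
        ((2 * E t * A t + (V2 t \<bullet> V2 t + V1 t \<bullet> V3) * P t) * s t ^ 3 - P t * A t * (3 * s t ^ 2 * (A t / s t))) / (s t ^ 3 * s t ^ 3)) (at t)"
      by (rule DERIV_divide[OF DERIV_mult[OF dP dA] ds3]) (use sp in simp)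
    have "(hb1 has_real_derivative
        (2 * (N t + \<phi> t \<bullet> V2 t) * s t - 2 * E t * (A t / s t)) / (s t * s t) -
        ((2 * E t * A t + (V2 t \<bullet> V2 t + V1 t \<bullet> V3) * P t) * s t ^ 3 - P t * A t * (3 * s t ^ 2 * (A t / s t))) / (s t ^ 3 * s t ^ 3)) (at t)"
      unfolding defs(7) by (rule DERIV_diff[OF t1 t2])
    moreover have "(2 * (N t + \<phi> t \<bullet> V2 t) * s t - 2 * E t * (A t / s t)) / (s t * s t) -
        ((2 * E t * A t + (V2 t \<bullet> V2 t + V1 t \<bullet> V3) * P t) * s t ^ 3 - P t * A t * (3 * s t ^ 2 * (A t / s t))) / (s t ^ 3 * s t ^ 3)
      = 2 * (N t + \<phi> t \<bullet> V2 t) / s t - 4 * E t * A t / s t ^ 3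
           - P t * (V2 t \<bullet> V2 t + V1 t \<bullet> V3) / s t ^ 3 + 3 * P t * (A t)^2 / s t ^ 5"
      using sp by (simp add: field_simps eval_nat_numeral)
    ultimately show ?thesis by simp
  qed
qed

lemma curve_a:
  fixes V1 V2 :: "real \<Rightarrow> 'a::real_inner" and N s A ha ha1 :: "real \<Rightarrow> real"
  assumes d1: "(V1 has_vector_derivative V2 t) (at t)"
    and d2: "(V2 has_vector_derivative V3) (at t)"
    and nz: "V1 t \<noteq> 0"
    and defs: "N = (\<lambda>x. V1 x \<bullet> V1 x)" "s = (\<lambda>x. sqrt (N x))"
      "A = (\<lambda>x. V1 x \<bullet> V2 x)"
      "ha = (\<lambda>x. 1 / s x)" "ha1 = (\<lambda>x. - A x / s x ^ 3)"
  shows "(ha has_real_derivative ha1 t) (at t)"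
    and "(ha1 has_real_derivative
           - (V2 t \<bullet> V2 t + V1 t \<bullet> V3) / s t ^ 3 + 3 * (A t)^2 / s t ^ 5) (at t)"
proof -
  have Np: "N t > 0" using nz defs by simp
  have sp: "s t > 0" and Ns: "N t = s t ^ 2" using Np defs by auto
  have dN: "(N has_real_derivative 2 * A t) (at t)"
    using DERIV_inner[OF d1 d1] unfolding defs by (simp add: inner_commute)
  have dA: "(A has_real_derivative V2 t \<bullet> V2 t + V1 t \<bullet> V3) (at t)"
    using DERIV_inner[OF d1 d2] unfolding defs by (simp add: inner_commute)
  have ds: "(s has_real_derivative A t / s t) (at t)"
  proof -
    have "((\<lambda>x. sqrt (N x)) has_real_derivative inverse (sqrt (N t)) / 2 * (2 * A t)) (at t)"
      by (rule DERIV_chain2[OF DERIV_real_sqrt[OF Np] dN])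
    then show ?thesis using defs(2) by (simp add: field_simps)
  qed
  have ds3: "((\<lambda>x. s x ^ 3) has_real_derivative 3 * s t ^ 2 * (A t / s t)) (at t)"
    using ds by (auto intro!: derivative_eq_intros simp: power2_eq_square)
  show "(ha has_real_derivative ha1 t) (at t)"
    unfolding defs(4,5) 
    by (rule DERIV_cong[OF DERIV_divide[OF DERIV_const ds]]) (use sp in \<open>simp_all add: field_simps eval_nat_numeral\<close>)
  show "(ha1 has_real_derivative
           - (V2 t \<bullet> V2 t + V1 t \<bullet> V3) / s t ^ 3 + 3 * (A t)^2 / s t ^ 5) (at t)"
    unfolding defs(5)
    by (rule DERIV_cong[OF DERIV_divide[OF DERIV_minus[OF dA] ds3]]) (use sp in \<open>simp_all add: field_simps eval_nat_numeral\<close>)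
qed




lemma scal_b:
  fixes m E f A c b s :: real
  assumes "s > 0"
  shows "let P = 1 + m; h = P / s; h1 = 2*E/s - P*A/s^3;
     h2 = 2*(s^2 + f)/s - 4*E*A/s^3 - P*(c + b)/s^3 + 3*P*A^2/s^5;
     S1 = b/s^2 - 3*A^2/s^4 + 3/2*c/s^2 in
     2*h*h2 - h1^2 + 2*S1*h^2 - 4 =
     4*(m - E^2/s^2) + 4*P*(f - E*A/s^2)/s^2 + P^2*(c - A^2/s^2)/s^4"
  using assms by (simp add: Let_def field_simps eval_nat_numeral)

lemma scal_a:
  fixes A c b s :: real
  assumes "s > 0"
  shows "let h = 1 / s; h1 = - A/s^3;
     h2 = - (c + b)/s^3 + 3*A^2/s^5;
     S1 = b/s^2 - 3*A^2/s^4 + 3/2*c/s^2 in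
     2*h*h2 - h1^2 + 2*S1*h^2 = (c - A^2/s^2)/s^4"
  using assms by (simp add: Let_def field_simps eval_nat_numeral)

lemma vec_b:
  fixes x v1 v2 :: "'a::real_inner"
  assumes "s > 0" "v1 \<bullet> v1 = s^2"
  shows "let X = 2 *\<^sub>R (x - ((x \<bullet> v1)/s^2) *\<^sub>R v1) + ((1 + x \<bullet> x)/s^2) *\<^sub>R (v2 - ((v1 \<bullet> v2)/s^2) *\<^sub>R v1) in
    X \<bullet> X = 4*(x \<bullet> x - (x \<bullet> v1)^2/s^2) + 4*(1 + x \<bullet> x)*(x \<bullet> v2 - (x \<bullet> v1)*(v1 \<bullet> v2)/s^2)/s^2
       + (1 + x \<bullet> x)^2*(v2 \<bullet> v2 - (v1 \<bullet> v2)^2/s^2)/s^4"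
  using assms by (simp add: Let_def inner_simps inner_commute field_simps eval_nat_numeral)

lemma vec_a:
  fixes v1 v2 :: "'a::real_inner"
  assumes "s > 0" "v1 \<bullet> v1 = s^2"
  shows "(v2 - ((v1 \<bullet> v2)/s^2) *\<^sub>R v1) \<bullet> (v2 - ((v1 \<bullet> v2)/s^2) *\<^sub>R v1) = v2 \<bullet> v2 - (v1 \<bullet> v2)^2/s^2"
  using assms by (simp add: inner_simps inner_commute field_simps eval_nat_numeral)




lemma y_b:
  fixes h h1 g :: "real \<Rightarrow> real"
  assumes hp: "h t > 0" and dh: "(h has_real_derivative h1 t) (at t)" and dh1: "(h1 has_real_derivative h2) (at t)"
    and dg: "(g has_real_derivative 1 / h t) (at t)"
  shows "((\<lambda>x. sqrt (h x) * (cos (g x) + F0 * sin (g x))) has_real_derivative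
           h1 t / (2 * sqrt (h t)) * (cos (g t) + F0 * sin (g t)) + (- sin (g t) + F0 * cos (g t)) / sqrt (h t)) (at t)"
    and "((\<lambda>x. h1 x / (2 * sqrt (h x)) * (cos (g x) + F0 * sin (g x)) + (- sin (g x) + F0 * cos (g x)) / sqrt (h x))
          has_real_derivative
           (2 * h t * h2 - (h1 t)^2) / (4 * h t * sqrt (h t)) * (cos (g t) + F0 * sin (g t))
           - (cos (g t) + F0 * sin (g t)) / (h t * sqrt (h t))) (at t)"
proof -
  note sd = sqrt_derivs[OF hp dh dh1]
  obtain q where q: "q > 0" "sqrt (h t) = q" "h t = q^2"
    using hp by (intro that[of "sqrt (h t)"]) auto
  define C where "C = (\<lambda>x. cos (g x) + F0 * sin (g x))"
  define S where "S = (\<lambda>x. - sin (g x) + F0 * cos (g x))"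
  have dC: "(C has_real_derivative S t / h t) (at t)"
    unfolding C_def S_def
    by (rule DERIV_cong[OF DERIV_add[OF DERIV_chain2[OF DERIV_cos dg] DERIV_cmult[OF DERIV_chain2[OF DERIV_sin dg]]]])
      (use hp in \<open>simp add: field_simps\<close>)
  have dS: "(S has_real_derivative - C t / h t) (at t)"
    unfolding C_def S_def
    by (rule DERIV_cong[OF DERIV_add[OF DERIV_minus[OF DERIV_chain2[OF DERIV_sin dg]] DERIV_cmult[OF DERIV_chain2[OF DERIV_cos dg]]]])
      (use hp in \<open>simp add: field_simps\<close>)
  have "((\<lambda>x. sqrt (h x) * C x) has_real_derivative
           h1 t / (2 * sqrt (h t)) * C t + S t / sqrt (h t)) (at t)"
    apply (rule DERIV_cong[OF DERIV_mult[OF sd(1) dC]])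
    unfolding q(2) unfolding q(3) using q(1) by (simp add: field_simps power2_eq_square)
  then show "((\<lambda>x. sqrt (h x) * (cos (g x) + F0 * sin (g x))) has_real_derivative
           h1 t / (2 * sqrt (h t)) * (cos (g t) + F0 * sin (g t)) + (- sin (g t) + F0 * cos (g t)) / sqrt (h t)) (at t)"
    unfolding C_def S_def .
  have "((\<lambda>x. h1 x / (2 * sqrt (h x)) * C x + S x / sqrt (h x))
          has_real_derivative
           (2 * h t * h2 - (h1 t)^2) / (4 * h t * sqrt (h t)) * C t - C t / (h t * sqrt (h t))) (at t)"
    apply (rule DERIV_cong[OF DERIV_add[OF DERIV_mult[OF sd(2) dC] DERIV_divide[OF dS sd(1)]]])
    using q(1) apply (simp add: q(2))
    unfolding q(2) unfolding q(3) using q(1) by (simp add: field_simps power2_eq_square)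
  then show "((\<lambda>x. h1 x / (2 * sqrt (h x)) * (cos (g x) + F0 * sin (g x)) + (- sin (g x) + F0 * cos (g x)) / sqrt (h x))
          has_real_derivative
           (2 * h t * h2 - (h1 t)^2) / (4 * h t * sqrt (h t)) * (cos (g t) + F0 * sin (g t))
           - (cos (g t) + F0 * sin (g t)) / (h t * sqrt (h t))) (at t)"
    unfolding C_def S_def .
qed

lemma Fscal:
  fixes q F1v F2v F3 F0 Ft pv :: real
  assumes q: "q > 0" and F1: "F1v = 1/q^2" and pv: "pv = (F3 * F1v - F2v * F2v) / F1v^2 / 2 - 1/4 * (F2v / F1v)^2"
  shows "(2 * (1 / F1v) * ((2 * F2v^2 - F3 * F1v) / F1v ^ 3) - (- F2v / F1v^2)^2) / (4 * (1 / F1v) * q) * (1 + F0 * Ft)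
     + (0 + F0 * F1v) * (- F2v / F1v^2 / (2 * q))
     + ((- F2v / F1v^2 / (2 * q) * F0 + 0 * q) * F1v + F2v * (q * F0))
     = - pv * (q * (1 + F0 * Ft))"
proof -
  have a: "(2 * (1 / F1v) * ((2 * F2v^2 - F3 * F1v) / F1v ^ 3) - (- F2v / F1v^2)^2) / (4 * (1 / F1v) * q) = - pv * q"
    unfolding pv F1 using q by (simp add: field_simps eval_nat_numeral)
  have b: "(0 + F0 * F1v) * (- F2v / F1v^2 / (2 * q))
     + ((- F2v / F1v^2 / (2 * q) * F0 + 0 * q) * F1v + F2v * (q * F0)) = 0"
    unfolding F1 using q by (simp add: field_simps eval_nat_numeral)
  show ?thesis using a b by (simp add: algebra_simps)
qed

lemma F_side:
  fixes F F1 F2 :: "real \<Rightarrow> real"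
  assumes dF: "(F has_real_derivative F1 t) (at t)" and dF1: "(F1 has_real_derivative F2 t) (at t)"
    and dF2: "(F2 has_real_derivative F3) (at t)" and Fp: "F1 t > 0"
    and sch: "(F3 * F1 t - F2 t * F2 t) / (F1 t)^2 - 1/2 * (F2 t / F1 t)^2 = 2 * pv"
  shows "((\<lambda>x. sqrt (1 / F1 x) * (1 + F0 * F x)) has_real_derivative
           (- F2 t / (F1 t)^2) / (2 * sqrt (1 / F1 t)) * (1 + F0 * F t) + sqrt (1 / F1 t) * F0 * F1 t) (at t)"
    and "((\<lambda>x. (- F2 x / (F1 x)^2) / (2 * sqrt (1 / F1 x)) * (1 + F0 * F x) + sqrt (1 / F1 x) * F0 * F1 x)
          has_real_derivative - pv * (sqrt (1 / F1 t) * (1 + F0 * F t))) (at t)"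
proof -
  have hp: "1 / F1 t > 0" using Fp by simp
  have dh: "((\<lambda>x. 1 / F1 x) has_real_derivative - F2 t / (F1 t)^2) (at t)"
    using dF1 Fp by (auto intro!: derivative_eq_intros simp: field_simps power2_eq_square)
  have dh1: "((\<lambda>x. - F2 x / (F1 x)^2) has_real_derivative (2 * (F2 t)^2 - F3 * F1 t) / (F1 t)^3) (at t)"
    using dF1 dF2 Fp by (auto intro!: derivative_eq_intros simp: field_simps eval_nat_numeral)
  note sd = sqrt_derivs[where h="\<lambda>x. 1 / F1 x", OF hp dh dh1]
  have sq: "sqrt (1 / F1 t) * sqrt (1 / F1 t) = 1 / F1 t" using hp by simp
  have sp: "sqrt (1 / F1 t) > 0" using Fp by simp
  show "((\<lambda>x. sqrt (1 / F1 x) * (1 + F0 * F x)) has_real_derivative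
           (- F2 t / (F1 t)^2) / (2 * sqrt (1 / F1 t)) * (1 + F0 * F t) + sqrt (1 / F1 t) * F0 * F1 t) (at t)"
    using DERIV_mult[OF sd(1) DERIV_add[OF DERIV_const[of 1] DERIV_cmult[OF dF, of F0]]]
    by (simp add: algebra_simps)
  define u where "u = (\<lambda>x. sqrt (1 / F1 x))"
  define u1 where "u1 = (\<lambda>x. (- F2 x / (F1 x)^2) / (2 * sqrt (1 / F1 x)))"
  have du: "(u has_real_derivative u1 t) (at t)" using sd(1) unfolding u_def u1_def by simp
  have du1: "(u1 has_real_derivative (2 * (1 / F1 t) * ((2 * (F2 t)^2 - F3 * F1 t) / (F1 t)^3) - (- F2 t / (F1 t)^2)^2) / (4 * (1 / F1 t) * sqrt (1 / F1 t))) (at t)"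
    using sd(2) unfolding u1_def by simp
  have dL: "((\<lambda>x. 1 + F0 * F x) has_real_derivative 0 + F0 * F1 t) (at t)"
    by (rule DERIV_add[OF DERIV_const DERIV_cmult[OF dF]])
  note d = DERIV_add[OF DERIV_mult[OF du1 dL] DERIV_mult[OF DERIV_mult[OF du DERIV_const[of F0]] dF1]]
  obtain q where q: "q > 0" "sqrt (1 / F1 t) = q" "F1 t = 1 / q^2"
    using Fp sq sp by (intro that[of "sqrt (1 / F1 t)"]) (auto simp: field_simps)
  have pv: "pv = (F3 * F1 t - F2 t * F2 t) / (F1 t)^2 / 2 - 1/4 * (F2 t / F1 t)^2" using sch by simp
  show "((\<lambda>x. (- F2 x / (F1 x)^2) / (2 * sqrt (1 / F1 x)) * (1 + F0 * F x) + sqrt (1 / F1 x) * F0 * F1 x)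
          has_real_derivative - pv * (sqrt (1 / F1 t) * (1 + F0 * F t))) (at t)"
    apply (rule DERIV_cong[OF d[unfolded u_def u1_def]])
    unfolding q(2) by (rule Fscal[OF q(1) q(3) pv])

qed





lemma sqrt_combine_a:
  fixes h p A B :: real
  assumes "h > 0"
  shows "(A) / (4 * h * sqrt h) + p * sqrt h = (A + 4 * p * h^2) / (4 * h * sqrt h)"
proof -
  obtain q where q: "q > 0" "sqrt h = q" "h = q^2" using assms by (intro that[of "sqrt h"]) auto
  show ?thesis unfolding q(2) unfolding q(3) using q(1) by (simp add: field_simps eval_nat_numeral)
qed

lemma sqrt_combine_b:
  fixes h p A :: real
  assumes "h > 0"
  shows "A / (4 * h * sqrt h) - 1 / (h * sqrt h) + p * sqrt h = (A + 4 * p * h^2 - 4) / (4 * h * sqrt h)"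
proof -
  obtain q where q: "q > 0" "sqrt h = q" "h = q^2" using assms by (intro that[of "sqrt h"]) auto
  show ?thesis unfolding q(2) unfolding q(3) using q(1) by (simp add: field_simps eval_nat_numeral)
qed

lemma sq_id:
  fixes a b F :: real
  shows "(a + F * b)^2 + (F * a - b)^2 = (1 + F^2) * (b^2 + a^2)"
  by (simp add: power2_eq_square algebra_simps)

lemma eq_b_alg:
  fixes a C h w Y p :: real
  assumes "w > 0" "h > 0"
  shows "(a * C - C / (h * w)) * Y - w * C * (- p * Y) = Y * (a - 1 / (h * w) + p * w) / w * (w * C)"
  using assms by (simp add: field_simps)

theorem theorem1:
  fixes p F :: "real \<Rightarrow> real" and \<phi> :: "real \<Rightarrow> real ^ 'n"
  assumes p_cont: "continuous_on {-1<..<1} p"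
    and p_pos: "\<forall>x\<in>{-1<..<1}. p x > 0"
    and p_even: "\<forall>x\<in>{-1<..<1}. p (-x) = p x"
    and p_disc: "disconjugate p"
    and F_diff: "\<forall>x\<in>{-1<..<1}. F differentiable at x \<and> deriv F differentiable at x
                   \<and> deriv (deriv F) differentiable at x"
    and F_nz: "\<forall>x\<in>{-1<..<1}. deriv F x \<noteq> 0"
    and F_ode: "\<forall>x\<in>{-1<..<1}. schwarzian F x = 2 * p x"
    and F_init: "F 0 = 0" "deriv F 0 = 1" "deriv (deriv F) 0 = 0"
    and phi_diff: "\<forall>x\<in>{-1<..<1}. \<phi> differentiable at x \<and> vd \<phi> differentiable at x
                   \<and> vd (vd \<phi>) differentiable at x"
    and phi_C3: "continuous_on {-1<..<1} (vd (vd (vd \<phi>)))"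
    and phi_nz: "\<forall>x\<in>{-1<..<1}. vd \<phi> x \<noteq> 0"
    and phi_init: "\<phi> 0 = 0" "norm (vd \<phi> 0) = 1" "vd \<phi> 0 \<bullet> vd (vd \<phi>) 0 = 0"
    and S1_le: "\<forall>x\<in>{-1<..<1}. ahlfors_S1 \<phi> x \<le> 2 * p x"
  shows "\<forall>x\<in>{-1<..<1}. norm (vd \<phi> x) \<le> deriv F x
           \<and> norm (vd \<phi> x) / (1 + (norm (\<phi> x))^2) \<le> deriv F x / (1 + (F x)^2)"
proof
  fix x0 :: real assume x0I: "x0 \<in> {-1<..<1}"
  define I :: "real set" where "I = {-1<..<1}"
  define V1 where "V1 = vd \<phi>"
  define V2 where "V2 = vd V1"
  define V3 where "V3 = vd V2"
  define F1 where "F1 = deriv F"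
  define F2 where "F2 = deriv F1"
  define F3 where "F3 = deriv F2"
  have vdw: "(f has_vector_derivative vd f t) (at t)" if "f differentiable at t" for f :: "real \<Rightarrow> real ^ 'n" and t
    using that unfolding vd_def by (simp add: vector_derivative_works[symmetric])
  have d0: "(\<phi> has_vector_derivative V1 t) (at t)" if "t \<in> I" for t
    using phi_diff that vdw unfolding I_def V1_def by blast
  have d1: "(V1 has_vector_derivative V2 t) (at t)" if "t \<in> I" for t
    using phi_diff that vdw unfolding I_def V2_def V1_def by blast
  have d2: "(V2 has_vector_derivative V3 t) (at t)" if "t \<in> I" for t
    using phi_diff that vdw unfolding I_def V3_def V2_def V1_def by blast
  have dF: "(F has_real_derivative F1 t) (at t)" if "t \<in> I" for t
    using F_diff that DERIV_deriv_iff_real_differentiable unfolding I_def F1_def by blast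
  have dF1: "(F1 has_real_derivative F2 t) (at t)" if "t \<in> I" for t
    using F_diff that DERIV_deriv_iff_real_differentiable unfolding I_def F2_def F1_def by blast
  have dF2: "(F2 has_real_derivative F3 t) (at t)" if "t \<in> I" for t
    using F_diff that DERIV_deriv_iff_real_differentiable unfolding I_def F3_def F2_def F1_def by blast
  have F1nz: "F1 t \<noteq> 0" if "t \<in> I" for t using F_nz that unfolding I_def F1_def by blast
  have segI: "{min 0 t..max 0 t} \<subseteq> I" if "t \<in> I" for t using that unfolding I_def by auto
  have F1pos: "F1 t > 0" if tI: "t \<in> I" for t
  proof (rule ccontr)
    assume "\<not> F1 t > 0"
    then have neg: "F1 t \<le> 0" by simp
    have cont: "continuous_on {a..b} F1" if "{a..b} \<subseteq> I" for a b
      using that by (intro continuous_at_imp_continuous_on ballI DERIV_isCont[OF dF1]) auto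
    have F10: "F1 0 = 1" using F_init(2) unfolding F1_def .
    have "\<exists>z. min 0 t \<le> z \<and> z \<le> max 0 t \<and> F1 z = 0"
    proof (cases "t \<ge> 0")
      case True
      then show ?thesis using IVT2'[of F1 t 0 0] neg F10 cont[of 0 t] segI[OF tI] by auto
    next
      case False
      then show ?thesis using IVT'[of F1 t 0 0] neg F10 cont[of t 0] segI[OF tI] by auto
    qed
    then obtain z where "z \<in> {min 0 t..max 0 t}" "F1 z = 0" by auto
    then show False using F1nz segI[OF tI] by auto
  qed
  have sch: "(F3 t * F1 t - F2 t * F2 t) / (F1 t)^2 - 1/2 * (F2 t / F1 t)^2 = 2 * p t" if tI: "t \<in> I" for t
  proof -
    have "deriv (\<lambda>x. F2 x / F1 x) t = (F3 t * F1 t - F2 t * F2 t) / (F1 t * F1 t)"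
      by (rule DERIV_imp_deriv[OF DERIV_divide[OF dF2[OF tI] dF1[OF tI] F1nz[OF tI]]])
    moreover have "schwarzian F t = 2 * p t" using F_ode tI unfolding I_def by blast
    ultimately show ?thesis unfolding schwarzian_def F3_def F2_def F1_def
      by (simp add: power2_eq_square)
  qed

  define N where "N = (\<lambda>x. V1 x \<bullet> V1 x)"
  define s where "s = (\<lambda>x. sqrt (N x))"
  define P where "P = (\<lambda>x. 1 + \<phi> x \<bullet> \<phi> x)"
  define E where "E = (\<lambda>x. \<phi> x \<bullet> V1 x)"
  define A where "A = (\<lambda>x. V1 x \<bullet> V2 x)"
  define ha where "ha = (\<lambda>x. 1 / s x)"
  define ha1 where "ha1 = (\<lambda>x. - A x / s x ^ 3)"
  define ha2 where "ha2 = (\<lambda>x. - (V2 x \<bullet> V2 x + V1 x \<bullet> V3 x) / s x ^ 3 + 3 * (A x)^2 / s x ^ 5)"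
  define hb where "hb = (\<lambda>x. P x / s x)"
  define hb1 where "hb1 = (\<lambda>x. 2 * E x / s x - P x * A x / s x ^ 3)"
  define hb2 where "hb2 = (\<lambda>x. 2 * (N x + \<phi> x \<bullet> V2 x) / s x - 4 * E x * A x / s x ^ 3
           - P x * (V2 x \<bullet> V2 x + V1 x \<bullet> V3 x) / s x ^ 3 + 3 * P x * (A x)^2 / s x ^ 5)"
  have V1nz: "V1 t \<noteq> 0" if "t \<in> I" for t using phi_nz that unfolding I_def V1_def by blast
  have spos: "s t > 0" if "t \<in> I" for t using V1nz[OF that] unfolding s_def N_def by simp
  have Ns: "V1 t \<bullet> V1 t = (s t)^2" if "t \<in> I" for t using V1nz[OF that] unfolding s_def N_def by simp
  have snorm: "s t = norm (V1 t)" for t unfolding s_def N_def by (simp add: norm_eq_sqrt_inner)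
  have dha: "(ha has_real_derivative ha1 t) (at t)" "(ha1 has_real_derivative ha2 t) (at t)" if "t \<in> I" for t
    using curve_a[OF d1[OF that] d2[OF that] V1nz[OF that] N_def s_def A_def ha_def ha1_def] unfolding ha2_def by auto
  have dhb: "(hb has_real_derivative hb1 t) (at t)" "(hb1 has_real_derivative hb2 t) (at t)" if "t \<in> I" for t
    using curve_b[OF d0[OF that] d1[OF that] d2[OF that] V1nz[OF that] N_def s_def P_def E_def A_def hb_def hb1_def] unfolding hb2_def by auto
  have S1: "(V1 t \<bullet> V3 t) / (s t)^2 - 3 * (V1 t \<bullet> V2 t)^2 / (s t)^4 + 3/2 * (V2 t \<bullet> V2 t) / (s t)^2 \<le> 2 * p t"
    if tI: "t \<in> I" for t
  proof -
    have "ahlfors_S1 \<phi> t \<le> 2 * p t" using S1_le tI unfolding I_def by blast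
    moreover have "(norm (V1 t))^4 = ((norm (V1 t))^2)^2" by simp
    ultimately show ?thesis unfolding ahlfors_S1_def snorm V1_def[symmetric] V2_def[symmetric] V3_def[symmetric]
      by (simp add: power2_norm_eq_inner)
  qed
  have Ka: "2 * ha t * ha2 t - (ha1 t)^2 + 4 * p t * (ha t)^2 \<ge> 0" if tI: "t \<in> I" for t
  proof -
    have e: "2 * ha t * ha2 t - (ha1 t)^2 + 2 * ((V1 t \<bullet> V3 t) / (s t)^2 - 3 * (V1 t \<bullet> V2 t)^2 / (s t)^4 + 3/2 * (V2 t \<bullet> V2 t) / (s t)^2) * (ha t)^2
       = (V2 t \<bullet> V2 t - (A t)^2 / (s t)^2) / (s t)^4"
      using scal_a[OF spos[OF tI], of "A t" "V2 t \<bullet> V2 t" "V1 t \<bullet> V3 t"]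
      unfolding ha_def ha1_def ha2_def A_def by (simp add: Let_def)
    have "V2 t \<bullet> V2 t - (A t)^2 / (s t)^2 \<ge> 0"
      using vec_a[OF spos[OF tI] Ns[OF tI], of "V2 t"] unfolding A_def by (metis inner_ge_zero)
    then have "(V2 t \<bullet> V2 t - (A t)^2 / (s t)^2) / (s t)^4 \<ge> 0" by simp
    moreover have "2 * ((V1 t \<bullet> V3 t) / (s t)^2 - 3 * (V1 t \<bullet> V2 t)^2 / (s t)^4 + 3/2 * (V2 t \<bullet> V2 t) / (s t)^2) * (ha t)^2
       \<le> 4 * p t * (ha t)^2"
      using S1[OF tI] by (intro mult_right_mono) auto
    ultimately show ?thesis using e by linarith
  qed
  have Kb: "2 * hb t * hb2 t - (hb1 t)^2 + 4 * p t * (hb t)^2 - 4 \<ge> 0" if tI: "t \<in> I" for t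
  proof -
    define X where "X = 2 *\<^sub>R (\<phi> t - ((\<phi> t \<bullet> V1 t)/(s t)^2) *\<^sub>R V1 t) + ((1 + \<phi> t \<bullet> \<phi> t)/(s t)^2) *\<^sub>R (V2 t - ((V1 t \<bullet> V2 t)/(s t)^2) *\<^sub>R V1 t)"
    have e: "2 * hb t * hb2 t - (hb1 t)^2 + 2 * ((V1 t \<bullet> V3 t) / (s t)^2 - 3 * (V1 t \<bullet> V2 t)^2 / (s t)^4 + 3/2 * (V2 t \<bullet> V2 t) / (s t)^2) * (hb t)^2 - 4
       = X \<bullet> X"
      using scal_b[OF spos[OF tI], where m="\<phi> t \<bullet> \<phi> t" and E="\<phi> t \<bullet> V1 t" and f="\<phi> t \<bullet> V2 t" and A="A t" and c="V2 t \<bullet> V2 t" and b="V1 t \<bullet> V3 t"]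
        vec_b[OF spos[OF tI] Ns[OF tI], of "\<phi> t" "V2 t"]
      unfolding hb_def hb1_def hb2_def A_def P_def E_def X_def N_def Ns[OF tI]
      by (simp add: Let_def)
    moreover have "2 * ((V1 t \<bullet> V3 t) / (s t)^2 - 3 * (V1 t \<bullet> V2 t)^2 / (s t)^4 + 3/2 * (V2 t \<bullet> V2 t) / (s t)^2) * (hb t)^2
       \<le> 4 * p t * (hb t)^2"
      using S1[OF tI] by (intro mult_right_mono) auto
    ultimately show ?thesis using inner_ge_zero[of X] by linarith
  qed
  have x0I': "x0 \<in> I" using x0I unfolding I_def .
  have haP: "ha t > 0" if "t \<in> I" for t using spos[OF that] unfolding ha_def by simp
  have hbP: "hb t > 0" if "t \<in> I" for t using spos[OF that] unfolding hb_def P_def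
    by (simp add: add_pos_nonneg)
  have s0: "s 0 = 1" using phi_init(2) unfolding snorm V1_def by simp
  have A0: "A 0 = 0" using phi_init(3) unfolding A_def V2_def V1_def by simp
  have E0: "E 0 = 0" using phi_init(1) unfolding E_def by simp
  have P0: "P 0 = 1" using phi_init(1) unfolding P_def by simp
  have F10: "F1 0 = 1" and F20: "F2 0 = 0" using F_init unfolding F2_def F1_def by auto
  have I0: "0 \<in> I" unfolding I_def by simp
  show "norm (vd \<phi> x0) \<le> deriv F x0
           \<and> norm (vd \<phi> x0) / (1 + (norm (\<phi> x0))^2) \<le> deriv F x0 / (1 + (F x0)^2)"
  proof (cases "x0 = 0")
    case True
    then show ?thesis using phi_init F_init by simp
  next
    case x0nz: False
    define J where "J = {min 0 x0..max 0 x0}"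
    have JI: "t \<in> I" if "t \<in> J" for t using segI[OF x0I'] that unfolding J_def by auto
    have partA: "norm (vd \<phi> x0) \<le> deriv F x0"
    proof -
      have "(\<lambda>x. sqrt (1 / F1 x) * (1 + 0 * F x)) x0 \<le> (\<lambda>x. sqrt (ha x)) x0"
      proof (rule sturm_any[OF x0nz, where ya="\<lambda>x. ha1 x / (2 * sqrt (ha x))"
          and yb="\<lambda>x. (2 * ha x * ha2 x - (ha1 x)^2) / (4 * ha x * sqrt (ha x))"
          and Ya="\<lambda>x. (- F2 x / (F1 x)^2) / (2 * sqrt (1 / F1 x)) * (1 + 0 * F x) + sqrt (1 / F1 x) * 0 * F1 x"
          and Yb="\<lambda>x. - p x * (sqrt (1 / F1 x) * (1 + 0 * F x))"
          and k="\<lambda>x. sqrt (1 / F1 x) * ((2 * ha x * ha2 x - (ha1 x)^2) / (4 * ha x * sqrt (ha x)) + p x * sqrt (ha x)) / sqrt (ha x)"])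
        fix t assume "t \<in> {min 0 x0..max 0 x0}"
        then have tI: "t \<in> I" using JI unfolding J_def by auto
        show "((\<lambda>x. sqrt (ha x)) has_real_derivative ha1 t / (2 * sqrt (ha t))) (at t) \<and>
          ((\<lambda>x. ha1 x / (2 * sqrt (ha x))) has_real_derivative (2 * ha t * ha2 t - (ha1 t)^2) / (4 * ha t * sqrt (ha t))) (at t)"
          using sqrt_derivs[OF haP[OF tI] dha[OF tI]] by simp
        show "((\<lambda>x. sqrt (1 / F1 x) * (1 + 0 * F x)) has_real_derivative
           (- F2 t / (F1 t)^2) / (2 * sqrt (1 / F1 t)) * (1 + 0 * F t) + sqrt (1 / F1 t) * 0 * F1 t) (at t) \<and>
          ((\<lambda>x. (- F2 x / (F1 x)^2) / (2 * sqrt (1 / F1 x)) * (1 + 0 * F x) + sqrt (1 / F1 x) * 0 * F1 x)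
           has_real_derivative - p t * (sqrt (1 / F1 t) * (1 + 0 * F t))) (at t)"
          using F_side[OF dF[OF tI] dF1[OF tI] dF2[OF tI] F1pos[OF tI] sch[OF tI], of 0] by blast
        show "sqrt (1 / F1 t) * (1 + 0 * F t) > 0" using F1pos[OF tI] by simp
        have hq: "sqrt (ha t) > 0" using haP[OF tI] by simp
        show "(2 * ha t * ha2 t - (ha1 t)^2) / (4 * ha t * sqrt (ha t)) * (sqrt (1 / F1 t) * (1 + 0 * F t))
            - sqrt (ha t) * (- p t * (sqrt (1 / F1 t) * (1 + 0 * F t))) =
            sqrt (1 / F1 t) * ((2 * ha t * ha2 t - (ha1 t)^2) / (4 * ha t * sqrt (ha t)) + p t * sqrt (ha t)) / sqrt (ha t) * sqrt (ha t)"
          using hq by (simp add: field_simps)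
        have "(2 * ha t * ha2 t - (ha1 t)^2) / (4 * ha t * sqrt (ha t)) + p t * sqrt (ha t) \<ge> 0"
          unfolding sqrt_combine_a[OF haP[OF tI]] using Ka[OF tI] haP[OF tI] by simp
        then show "sqrt (1 / F1 t) * ((2 * ha t * ha2 t - (ha1 t)^2) / (4 * ha t * sqrt (ha t)) + p t * sqrt (ha t)) / sqrt (ha t) \<ge> 0"
          using F1pos[OF tI] hq by simp
      next
        show "sqrt (ha 0) = sqrt (1 / F1 0) * (1 + 0 * F 0)" using s0 F10 unfolding ha_def by simp
        show "ha1 0 / (2 * sqrt (ha 0)) = (- F2 0 / (F1 0)^2) / (2 * sqrt (1 / F1 0)) * (1 + 0 * F 0) + sqrt (1 / F1 0) * 0 * F1 0"
          using A0 F20 unfolding ha1_def by simp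
      qed
      then have "sqrt (1 / F1 x0) \<le> sqrt (1 / s x0)" unfolding ha_def by simp
      then have "1 / F1 x0 \<le> 1 / s x0" by simp
      then have "s x0 \<le> F1 x0" using spos[OF x0I'] F1pos[OF x0I'] by (simp add: divide_le_cancel field_simps)
      then show ?thesis unfolding snorm V1_def F1_def .
    qed
    have partB: "norm (vd \<phi> x0) / (1 + (norm (\<phi> x0))^2) \<le> deriv F x0 / (1 + (F x0)^2)"
    proof -
      define F0 where "F0 = F x0"
      define c where "c = (1 + \<bar>x0\<bar>) / 2"
      have c1: "c < 1" "\<bar>x0\<bar> < c" using x0I unfolding c_def by auto
      have cI: "{-c..c} \<subseteq> I" using c1 unfolding I_def by auto
      have Jc: "t \<in> {-c<..<c}" if "t \<in> {min 0 x0..max 0 x0}" for t using that c1 by auto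
      have contg: "continuous_on {-c..c} (\<lambda>x. 1 / hb x)"
      proof (intro continuous_at_imp_continuous_on ballI)
        fix x assume "x \<in> {-c..c}"
        then have xI: "x \<in> I" using cI by auto
        show "isCont (\<lambda>x. 1 / hb x) x"
          using DERIV_isCont[OF dhb(1)[OF xI]] hbP[OF xI] by (intro continuous_intros) auto
      qed
      define g where "g = (\<lambda>x. integral {-c..x} (\<lambda>x. 1 / hb x) - integral {-c..0} (\<lambda>x. 1 / hb x))"
      have dg: "(g has_real_derivative 1 / hb t) (at t)" if "t \<in> {-c<..<c}" for t
      proof -
        have "((\<lambda>x. integral {-c..x} (\<lambda>x. 1 / hb x)) has_real_derivative 1 / hb t) (at t within {-c..c})"
          using integral_has_real_derivative[OF contg, of t] that by auto
        then have "((\<lambda>x. integral {-c..x} (\<lambda>x. 1 / hb x)) has_real_derivative 1 / hb t) (at t)"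
          using at_within_Icc_at[of "-c" t c] that by auto
        then show ?thesis unfolding g_def using DERIV_diff[OF _ DERIV_const] by fastforce
      qed
      have g0: "g 0 = 0" unfolding g_def by simp
      have Fmono: "F a \<le> F b" if "a \<le> b" "a \<in> I" "b \<in> I" for a b
      proof (rule DERIV_nonneg_imp_increasing_open[of a b F])
        show "a \<le> b" by fact
        show "\<exists>y. (F has_real_derivative y) (at x) \<and> 0 \<le> y" if "a < x" "x < b" for x
        proof -
          have "x \<in> I" using that \<open>a \<in> I\<close> \<open>b \<in> I\<close> unfolding I_def by auto
          then show ?thesis using dF F1pos less_imp_le by blast
        qed
        show "continuous_on {a..b} F"
        proof (intro continuous_at_imp_continuous_on ballI)
          fix x assume "x \<in> {a..b}"
          then have "x \<in> I" using that unfolding I_def by auto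
          then show "isCont F x" using DERIV_isCont[OF dF] by blast
        qed
      qed
      have Fsign: "F0 * F t \<ge> 0" if "t \<in> {min 0 x0..max 0 x0}" for t
      proof (cases "x0 > 0")
        case True
        then have "0 \<le> t" "t \<le> x0" using that by auto
        then have "F 0 \<le> F t" "F 0 \<le> F x0" using Fmono JI[unfolded J_def] that I0 x0I' by auto
        then show ?thesis unfolding F0_def using F_init(1) by simp
      next
        case False
        then have "t \<le> 0" "x0 \<le> t" using that by auto
        then have "F t \<le> F 0" "F x0 \<le> F 0" using Fmono JI[unfolded J_def] that I0 x0I' by auto
        then show ?thesis unfolding F0_def using F_init(1) by (simp add: mult_nonpos_nonpos)
      qed
      define C where "C = (\<lambda>x. cos (g x) + F0 * sin (g x))"
      have main: "(\<lambda>x. sqrt (1 / F1 x) * (1 + F0 * F x)) x0 \<le> (\<lambda>x. sqrt (hb x) * (cos (g x) + F0 * sin (g x))) x0"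
      proof (rule sturm_any[OF x0nz, where ya="\<lambda>x. hb1 x / (2 * sqrt (hb x)) * (cos (g x) + F0 * sin (g x)) + (- sin (g x) + F0 * cos (g x)) / sqrt (hb x)"
          and yb="\<lambda>x. (2 * hb x * hb2 x - (hb1 x)^2) / (4 * hb x * sqrt (hb x)) * (cos (g x) + F0 * sin (g x))
           - (cos (g x) + F0 * sin (g x)) / (hb x * sqrt (hb x))"
          and Ya="\<lambda>x. (- F2 x / (F1 x)^2) / (2 * sqrt (1 / F1 x)) * (1 + F0 * F x) + sqrt (1 / F1 x) * F0 * F1 x"
          and Yb="\<lambda>x. - p x * (sqrt (1 / F1 x) * (1 + F0 * F x))"
          and k="\<lambda>x. sqrt (1 / F1 x) * (1 + F0 * F x) * ((2 * hb x * hb2 x - (hb1 x)^2) / (4 * hb x * sqrt (hb x)) - 1 / (hb x * sqrt (hb x)) + p x * sqrt (hb x)) / sqrt (hb x)"])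
        fix t assume tJ: "t \<in> {min 0 x0..max 0 x0}"
        then have tI: "t \<in> I" using JI unfolding J_def by auto
        show "((\<lambda>x. sqrt (hb x) * (cos (g x) + F0 * sin (g x))) has_real_derivative
           hb1 t / (2 * sqrt (hb t)) * (cos (g t) + F0 * sin (g t)) + (- sin (g t) + F0 * cos (g t)) / sqrt (hb t)) (at t) \<and>
          ((\<lambda>x. hb1 x / (2 * sqrt (hb x)) * (cos (g x) + F0 * sin (g x)) + (- sin (g x) + F0 * cos (g x)) / sqrt (hb x))
          has_real_derivative
           (2 * hb t * hb2 t - (hb1 t)^2) / (4 * hb t * sqrt (hb t)) * (cos (g t) + F0 * sin (g t))
           - (cos (g t) + F0 * sin (g t)) / (hb t * sqrt (hb t))) (at t)"
          using y_b[OF hbP[OF tI] dhb[OF tI] dg[OF Jc[OF tJ]], of F0] by blast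
        show "((\<lambda>x. sqrt (1 / F1 x) * (1 + F0 * F x)) has_real_derivative
           (- F2 t / (F1 t)^2) / (2 * sqrt (1 / F1 t)) * (1 + F0 * F t) + sqrt (1 / F1 t) * F0 * F1 t) (at t) \<and>
          ((\<lambda>x. (- F2 x / (F1 x)^2) / (2 * sqrt (1 / F1 x)) * (1 + F0 * F x) + sqrt (1 / F1 x) * F0 * F1 x)
           has_real_derivative - p t * (sqrt (1 / F1 t) * (1 + F0 * F t))) (at t)"
          using F_side[OF dF[OF tI] dF1[OF tI] dF2[OF tI] F1pos[OF tI] sch[OF tI], of F0] by blast
        have Yp: "sqrt (1 / F1 t) * (1 + F0 * F t) > 0" using F1pos[OF tI] Fsign[OF tJ]
          by (intro mult_pos_pos) auto
        then show "sqrt (1 / F1 t) * (1 + F0 * F t) > 0" .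
        have hq: "sqrt (hb t) > 0" using hbP[OF tI] by simp
        show "((2 * hb t * hb2 t - (hb1 t)^2) / (4 * hb t * sqrt (hb t)) * (cos (g t) + F0 * sin (g t))
           - (cos (g t) + F0 * sin (g t)) / (hb t * sqrt (hb t))) * (sqrt (1 / F1 t) * (1 + F0 * F t))
            - sqrt (hb t) * (cos (g t) + F0 * sin (g t)) * (- p t * (sqrt (1 / F1 t) * (1 + F0 * F t))) =
            sqrt (1 / F1 t) * (1 + F0 * F t) * ((2 * hb t * hb2 t - (hb1 t)^2) / (4 * hb t * sqrt (hb t)) - 1 / (hb t * sqrt (hb t)) + p t * sqrt (hb t)) / sqrt (hb t) * (sqrt (hb t) * (cos (g t) + F0 * sin (g t)))"
          by (rule eq_b_alg[OF hq hbP[OF tI]])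
        have "(2 * hb t * hb2 t - (hb1 t)^2) / (4 * hb t * sqrt (hb t)) - 1 / (hb t * sqrt (hb t)) + p t * sqrt (hb t) \<ge> 0"
          unfolding sqrt_combine_b[OF hbP[OF tI]] using Kb[OF tI] hbP[OF tI] by simp
        then show "sqrt (1 / F1 t) * (1 + F0 * F t) * ((2 * hb t * hb2 t - (hb1 t)^2) / (4 * hb t * sqrt (hb t)) - 1 / (hb t * sqrt (hb t)) + p t * sqrt (hb t)) / sqrt (hb t) \<ge> 0"
          using Yp hq by simp
      next
        have hb0: "hb 0 = 1" unfolding hb_def using P0 s0 by simp
        show "sqrt (hb 0) * (cos (g 0) + F0 * sin (g 0)) = sqrt (1 / F1 0) * (1 + F0 * F 0)"
          using hb0 g0 F10 F_init(1) by simp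
        show "hb1 0 / (2 * sqrt (hb 0)) * (cos (g 0) + F0 * sin (g 0)) + (- sin (g 0) + F0 * cos (g 0)) / sqrt (hb 0) =
          (- F2 0 / (F1 0)^2) / (2 * sqrt (1 / F1 0)) * (1 + F0 * F 0) + sqrt (1 / F1 0) * F0 * F1 0"
          using hb0 g0 F10 F20 E0 A0 s0 unfolding hb1_def by simp
      qed
      define r where "r = sqrt (1 + F0^2)"
      have rp: "r > 0" and r2: "r^2 = 1 + F0^2" unfolding r_def by (auto simp: add_pos_nonneg)
      have cs: "cos (g x0) + F0 * sin (g x0) \<le> r"
      proof -
        have "(cos (g x0) + F0 * sin (g x0))^2 \<le> 1 + F0^2"
        proof -
          have "(cos (g x0) + F0 * sin (g x0))^2 + (F0 * cos (g x0) - sin (g x0))^2 = 1 + F0^2"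
          proof -
            have "(cos (g x0) + F0 * sin (g x0))^2 + (F0 * cos (g x0) - sin (g x0))^2
                = (1 + F0^2) * ((sin (g x0))^2 + (cos (g x0))^2)"
              by (rule sq_id)
            then show ?thesis by simp
          qed
          then show ?thesis using zero_le_power2[of "F0 * cos (g x0) - sin (g x0)"] by linarith
        qed
        then show ?thesis unfolding r_def by (rule real_le_rsqrt)
      qed
      have hq0: "sqrt (hb x0) \<ge> 0" using hbP[OF x0I'] by simp
      have "sqrt (1 / F1 x0) * (1 + F0^2) \<le> sqrt (hb x0) * r"
        using main mult_left_mono[OF cs hq0] unfolding F0_def by (simp add: power2_eq_square)
      then have "sqrt (1 / F1 x0) * r * r \<le> sqrt (hb x0) * r" using r2 by (simp add: power2_eq_square mult.assoc)
      then have "sqrt (1 / F1 x0) * r \<le> sqrt (hb x0)" using rp by simp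
      then have "(sqrt (1 / F1 x0) * r)^2 \<le> (sqrt (hb x0))^2"
        using rp F1pos[OF x0I'] by (intro power_mono) auto
      then have "(1 / F1 x0) * (1 + F0^2) \<le> hb x0"
        using F1pos[OF x0I'] hbP[OF x0I'] r2 by (simp add: power_mult_distrib)
      then have "(1 + F0^2) / F1 x0 \<le> P x0 / s x0" unfolding hb_def by simp
      moreover have Pp: "P x0 > 0" unfolding P_def by (simp add: add_pos_nonneg)
      moreover have "1 + F0^2 > 0" by (simp add: add_pos_nonneg)
      ultimately have "(1 + F0^2) * s x0 \<le> P x0 * F1 x0"
        using spos[OF x0I'] F1pos[OF x0I'] by (simp add: field_simps)
      then have "s x0 / P x0 \<le> F1 x0 / (1 + F0^2)"
        using spos[OF x0I'] F1pos[OF x0I'] Pp \<open>1 + F0^2 > 0\<close> by (simp add: field_simps)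
      moreover have "P x0 = 1 + (norm (\<phi> x0))^2" unfolding P_def by (simp add: power2_norm_eq_inner)
      ultimately show ?thesis unfolding snorm V1_def F1_def F0_def by simp
    qed
    show ?thesis using partA partB by blast
  qed
qed


end
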